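(* Let $\epsilon>0$ and $n,m\ge1$. Write elements of $\mathbb{R}^{n\cdot m}$ as $u=[u_1,\dots,u_n]$ with $u_i\in\mathbb{R}^m$, and equip $\mathbb{R}^{n\cdot m}$ with the norm $\|u\|=\sum_{i=1}^n\|u_i\|_2$. Consider mechanisms $Q:\mathbb{R}^{n\cdot m}\to\Delta(\mathbb{R}^{n\cdot m})$ of the form $Qu=u+V$, where the noise $V$ has distribution $g\in\Delta(\mathbb{R}^{n\cdot m})$ independent of the input $u$, and suppose $Q$ is $\epsilon$-Lipschitz private with respect to this norm. Then $$\mathbb{E}_{V\sim g}\|V\|_2^2\;\ge\;\mathbb{E}_{V\sim l^{n,m}}\|V\|_2^2=\frac{nm(m+1)}{\epsilon^2},$$ where $l^{n,m}$ is the probability density on $\mathbb{R}^{n\cdot m}$ proportional to $e^{-\epsilon\sum_{i=1}^n\|v_i\|_2}$; i.e. the mechanism adding noise with density $l^{n,m}$ minimizes the mean-squared error for the identity query among all such mechanisms.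
   Context: $\Delta(\mathcal{Y})$ denotes the set of Borel probability measures on $\mathcal{Y}$. For a normed space $(\mathcal{U},\|\cdot\|)$, a mechanism $Q:\mathcal{U}\to\Delta(\mathcal{Y})$ is $\epsilon$-Lipschitz private if for all $u,u'\in\mathcal{U}$ and all measurable $\mathcal{S}\subseteq\mathcal{Y}$, $|\ln\mathbb{P}(Qu\in\mathcal{S})-\ln\mathbb{P}(Qu'\in\mathcal{S})|\le\epsilon\|u-u'\|$, equivalently $\mathbb{P}(Qu\in\mathcal{S})\le e^{\epsilon\|u-u'\|}\mathbb{P}(Qu'\in\mathcal{S})$. Here $\|V\|_2$ is the Euclidean norm of $V$ viewed as a vector in $\mathbb{R}^{n\cdot m}$. *)

theory Defs
  imports "HOL-Probability.Probability"
begin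

definition blocknorm :: "real^'m^'n \<Rightarrow> real" where
  "blocknorm u = (\<Sum>i\<in>UNIV. norm (u $ i))"

definition additive_mech :: "'a::euclidean_space measure \<Rightarrow> 'a \<Rightarrow> 'a measure" where
  "additive_mech g u = distr g borel (\<lambda>v. u + v)"

definition lipschitz_private ::
  "real \<Rightarrow> ('a::ab_group_add \<Rightarrow> real) \<Rightarrow> ('a \<Rightarrow> 'b::topological_space measure) \<Rightarrow> bool" where
  "lipschitz_private \<epsilon> N Q \<longleftrightarrow>
     (\<forall>u u'. \<forall>S\<in>sets borel. measure (Q u) S \<le> exp (\<epsilon> * N (u - u')) * measure (Q u') S)"

definition lap_density :: "real \<Rightarrow> real^'m^'n \<Rightarrow> real" where
  "lap_density \<epsilon> v = exp (- \<epsilon> * blocknorm v) /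
      (\<integral>(w::real^'m^'n). exp (- \<epsilon> * blocknorm w) \<partial>lborel)"

end

theory Submission
  imports Defs
begin


definition blk_scale :: "'n \<Rightarrow> real \<Rightarrow> real^'m^'n \<Rightarrow> real^'m^'n" where
  "blk_scale i l x = (\<chi> k. if k = i then l *\<^sub>R x $ k else x $ k)"

lemma blk_scale_nth: "blk_scale i l x $ k = (if k = i then l *\<^sub>R x $ k else x $ k)"
  by (simp add: blk_scale_def)

lemma blk_scale_eq:
  fixes i :: "'n::finite" and l :: real and x :: "real^'m::finite^'n"
  shows "blk_scale i l x = (\<Sum>j\<in>Basis. ((if j $ i \<noteq> 0 then l else 1) * (x \<bullet> j)) *\<^sub>R j)"
proof -
  have "blk_scale i l x = (\<Sum>j\<in>Basis. (blk_scale i l x \<bullet> j) *\<^sub>R j)"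
    by (simp add: euclidean_representation)
  also have "\<dots> = (\<Sum>j\<in>Basis. ((if j $ i \<noteq> 0 then l else 1) * (x \<bullet> j)) *\<^sub>R j)"
  proof (rule sum.cong[OF refl])
    fix j :: "real^'m^'n" assume "j \<in> Basis"
    then obtain k u where j: "j = axis k u" and u: "u \<in> Basis" unfolding Basis_vec_def by auto
    have u0: "u \<noteq> 0" using u by auto
    have ax: "axis k u $ i = (if i = k then u else 0)" by (simp add: axis_def)
    show "(blk_scale i l x \<bullet> j) *\<^sub>R j = ((if j $ i \<noteq> 0 then l else 1) * (x \<bullet> j)) *\<^sub>R j"
      using u0 by (cases "k = i") (auto simp: j inner_axis blk_scale_nth ax)
  qed
  finally show ?thesis .
qed

lemma Basis_vec_iff: "(j \<in> (Basis::(real^'m::finite^'n::finite) set)) \<longleftrightarrow> (\<exists>k. \<exists>u\<in>(Basis::(real^'m) set). j = axis k u)"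
  by (auto simp add: Basis_vec_def[where 'a="real^'m" and 'b='n])

lemma card_blk_basis:
  fixes i :: "'n::finite"
  shows "card {j\<in>(Basis :: (real^('m::finite)^'n) set). j $ i \<noteq> 0} = CARD('m)"
proof -
  have "{j\<in>(Basis :: (real^'m^'n) set). j $ i \<noteq> 0} = (\<lambda>u. axis i u) ` (Basis :: (real^'m) set)"
  proof (intro set_eqI iffI)
    fix j assume "j \<in> {j\<in>(Basis :: (real^'m^'n) set). j $ i \<noteq> 0}"
    then obtain k u where "u \<in> (Basis :: (real^'m) set)" "j = axis k u" "j $ i \<noteq> 0"
      by (auto simp: Basis_vec_iff)
    then show "j \<in> (\<lambda>u. axis i u) ` (Basis :: (real^'m) set)"
      by (cases "k = i") (auto simp: axis_def)
  next
    fix j assume "j \<in> (\<lambda>u. axis i u) ` (Basis :: (real^'m) set)"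
    then obtain u where "u \<in> (Basis :: (real^'m) set)" "j = axis i u" by auto
    then show "j \<in> {j\<in>(Basis :: (real^'m^'n) set). j $ i \<noteq> 0}"
      by (auto simp: Basis_vec_iff axis_nth)
  qed
  moreover have "inj_on (\<lambda>u. axis i u :: real^'m^'n) Basis"
    by (auto simp: inj_on_def axis_eq_axis)
  ultimately show ?thesis by (simp add: card_image)
qed
lemma prod_blk:
  fixes i :: "'n::finite" and l :: real assumes "l > 0"
  shows "(\<Prod>j\<in>(Basis :: (real^('m::finite)^'n) set). \<bar>if j $ i \<noteq> 0 then l else 1\<bar>) = l ^ CARD('m)"
proof -
  have "(\<Prod>j\<in>(Basis :: (real^'m^'n) set). \<bar>if j $ i \<noteq> 0 then l else 1\<bar>)
     = (\<Prod>j\<in>(Basis :: (real^'m^'n) set). (if j $ i \<noteq> 0 then l else 1))"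
    using assms by (intro prod.cong) auto
  also have "\<dots> = l ^ card {j\<in>(Basis :: (real^'m^'n) set). j $ i \<noteq> 0}"
    by (simp add: prod.If_cases Int_def)
  finally show ?thesis by (simp add: card_blk_basis)
qed

lemma blk_scale_measurable[measurable]: "blk_scale i l \<in> borel_measurable borel"
  unfolding blk_scale_eq by measurable

lemma nn_integral_blk_scale:
  fixes f :: "real^'m::finite^'n::finite \<Rightarrow> ennreal" and i :: 'n
  assumes "l > 0" and [measurable]: "f \<in> borel_measurable borel"
  shows "(\<integral>\<^sup>+x. f x \<partial>lborel) = ennreal (l ^ CARD('m)) * (\<integral>\<^sup>+x. f (blk_scale i l x) \<partial>lborel)"
proof -
  have c: "\<And>j::real^'m^'n. j \<in> Basis \<Longrightarrow> (if j $ i \<noteq> 0 then l else 1) \<noteq> 0" using assms by auto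
  have "lborel = density (distr lborel borel (\<lambda>x::real^'m^'n. 0 + (\<Sum>j\<in>Basis. ((if j $ i \<noteq> 0 then l else 1) * (x \<bullet> j)) *\<^sub>R j)))
      (\<lambda>_. (\<Prod>j\<in>(Basis::(real^'m^'n) set). \<bar>if j $ i \<noteq> 0 then l else 1\<bar>))"
    using lborel_affine_euclidean[where c="\<lambda>j::real^'m::finite^'n. if j $ i \<noteq> 0 then l else 1" and t=0, OF c] by simp
  also have "\<dots> = density (distr lborel borel (blk_scale i l)) (\<lambda>_. ennreal (l ^ CARD('m)))"
  proof -
    have "(\<Prod>j\<in>(Basis::(real^'m^'n) set). \<bar>if j $ i \<noteq> 0 then l else 1\<bar>) = l ^ CARD('m)"
      by (rule prod_blk[OF assms(1)])
    then show ?thesis by (simp add: blk_scale_eq[symmetric, abs_def])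
  qed
  finally have eq: "lborel = \<dots>" .
  show ?thesis
    by (subst eq) (simp add: nn_integral_density nn_integral_distr nn_integral_cmult)
qed



lemma vec_nth_measurable[measurable]: "(\<lambda>x::'a::real_normed_vector^'n::finite. x $ i) \<in> borel_measurable borel"
  by (intro borel_measurable_continuous_onI continuous_on_component continuous_on_id)

lemma norm_blk_scale_i: "norm (blk_scale i l x $ i) = \<bar>l\<bar> * norm (x $ i)"
  by (simp add: blk_scale_nth)

lemma moment_step:
  fixes \<Phi> :: "real^'m::finite^'n::finite \<Rightarrow> real" and i :: 'n and l \<epsilon> :: real and k :: nat
  assumes l: "l > 0" and [measurable]: "\<Phi> \<in> borel_measurable borel"
    and nn: "\<And>x. \<Phi> x \<ge> 0"
    and sc: "\<And>x. \<Phi> (blk_scale i l x) \<ge> exp (- (\<epsilon> * (l - 1) * norm (x $ i))) * \<Phi> x"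
  shows "(\<integral>\<^sup>+x. ennreal (\<Phi> x * norm (x $ i) ^ k) \<partial>lborel)
      \<ge> ennreal (l ^ (CARD('m) + k)) * (\<integral>\<^sup>+x. ennreal (exp (- (\<epsilon> * (l - 1) * norm (x $ i))) * \<Phi> x * norm (x $ i) ^ k) \<partial>lborel)"
proof -
  have "(\<integral>\<^sup>+x. ennreal (\<Phi> x * norm (x $ i) ^ k) \<partial>lborel)
     = ennreal (l ^ CARD('m)) * (\<integral>\<^sup>+x. ennreal (\<Phi> (blk_scale i l x) * norm (blk_scale i l x $ i) ^ k) \<partial>lborel)"
    by (rule nn_integral_blk_scale[OF l]) measurable
  also have "\<dots> = ennreal (l ^ CARD('m)) * (\<integral>\<^sup>+x. ennreal (l ^ k) * ennreal (\<Phi> (blk_scale i l x) * norm (x $ i) ^ k) \<partial>lborel)"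
    using l nn by (intro arg_cong2[where f="(*)"] refl nn_integral_cong)
       (auto simp: norm_blk_scale_i power_mult_distrib ennreal_mult'[symmetric] mult_ac)
  also have "\<dots> = ennreal (l ^ (CARD('m) + k)) * (\<integral>\<^sup>+x. ennreal (\<Phi> (blk_scale i l x) * norm (x $ i) ^ k) \<partial>lborel)"
  proof -
    have "(\<integral>\<^sup>+x. ennreal (l ^ k) * ennreal (\<Phi> (blk_scale i l x) * norm (x $ i) ^ k) \<partial>lborel)
       = ennreal (l ^ k) * (\<integral>\<^sup>+x. ennreal (\<Phi> (blk_scale i l x) * norm (x $ i) ^ k) \<partial>lborel)"
      by (rule nn_integral_cmult) measurable
    moreover have "ennreal (l ^ (CARD('m) + k)) = ennreal (l ^ CARD('m)) * ennreal (l ^ k)"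
      using l by (simp add: power_add ennreal_mult)
    ultimately show ?thesis by (simp only: mult.assoc)
  qed
  also have "\<dots> \<ge> ennreal (l ^ (CARD('m) + k)) * (\<integral>\<^sup>+x. ennreal (exp (- (\<epsilon> * (l - 1) * norm (x $ i))) * \<Phi> x * norm (x $ i) ^ k) \<partial>lborel)"
    by (intro mult_left_mono nn_integral_mono ennreal_leI mult_right_mono sc) auto
  finally show ?thesis .
qed

lemma moment_step_gt:
  fixes \<Phi> :: "real^'m::finite^'n::finite \<Rightarrow> real" and i :: 'n and l \<epsilon> :: real and k :: nat
  assumes l: "l > 1" and e: "\<epsilon> > 0" and [measurable]: "\<Phi> \<in> borel_measurable borel"
    and nn: "\<And>x. \<Phi> x \<ge> 0"
    and sc: "\<And>x. \<Phi> (blk_scale i l x) \<ge> exp (- (\<epsilon> * (l - 1) * norm (x $ i))) * \<Phi> x"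
  shows "(\<integral>\<^sup>+x. ennreal (\<Phi> x * norm (x $ i) ^ k) \<partial>lborel)
      \<le> ennreal (1 / l ^ (CARD('m) + k)) * (\<integral>\<^sup>+x. ennreal (\<Phi> x * norm (x $ i) ^ k) \<partial>lborel)
        + ennreal (\<epsilon> * (l - 1)) * (\<integral>\<^sup>+x. ennreal (\<Phi> x * norm (x $ i) ^ Suc k) \<partial>lborel)"
proof -
  let ?E = "\<lambda>x. exp (- (\<epsilon> * (l - 1) * norm (x $ i)))"
  let ?K = "\<integral>\<^sup>+x. ennreal (?E x * \<Phi> x * norm (x $ i) ^ k) \<partial>lborel"
  let ?J = "\<lambda>k. \<integral>\<^sup>+x. ennreal (\<Phi> x * norm (x $ i) ^ k) \<partial>lborel"
  have ge: "?J k \<ge> ennreal (l ^ (CARD('m) + k)) * ?K"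
    by (rule moment_step) (use l nn sc in auto)
  have "ennreal (1 / l ^ (CARD('m) + k)) * ?J k \<ge> ennreal (1 / l ^ (CARD('m) + k)) * (ennreal (l ^ (CARD('m) + k)) * ?K)"
    by (intro mult_left_mono ge) auto
  also have "ennreal (1 / l ^ (CARD('m) + k)) * (ennreal (l ^ (CARD('m) + k)) * ?K) = ?K"
    using l by (simp add: mult.assoc[symmetric] ennreal_mult'[symmetric])
  finally have K: "?K \<le> ennreal (1 / l ^ (CARD('m) + k)) * ?J k" .
  have "?J k \<le> (\<integral>\<^sup>+x. ennreal (?E x * \<Phi> x * norm (x $ i) ^ k) + ennreal (\<epsilon> * (l - 1)) * ennreal (\<Phi> x * norm (x $ i) ^ Suc k) \<partial>lborel)"
  proof (intro nn_integral_mono)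
    fix x :: "real^'m^'n"
    have t: "1 \<le> ?E x + \<epsilon> * (l - 1) * norm (x $ i)"
      using exp_ge_add_one_self[of "- (\<epsilon> * (l - 1) * norm (x $ i))"] by linarith
    have "\<Phi> x * norm (x $ i) ^ k \<le> (?E x + \<epsilon> * (l - 1) * norm (x $ i)) * (\<Phi> x * norm (x $ i) ^ k)"
      using mult_right_mono[OF t, of "\<Phi> x * norm (x $ i) ^ k"] nn by simp
    also have "\<dots> = ?E x * \<Phi> x * norm (x $ i) ^ k + \<epsilon> * (l - 1) * (\<Phi> x * norm (x $ i) ^ Suc k)"
      by (simp add: algebra_simps)
    finally show "ennreal (\<Phi> x * norm (x $ i) ^ k) \<le> ennreal (?E x * \<Phi> x * norm (x $ i) ^ k) + ennreal (\<epsilon> * (l - 1)) * ennreal (\<Phi> x * norm (x $ i) ^ Suc k)"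
      using l e nn by (simp add: ennreal_mult'[symmetric] ennreal_plus[symmetric] del: ennreal_plus)
  qed
  also have "\<dots> = ?K + ennreal (\<epsilon> * (l - 1)) * ?J (Suc k)"
    by (subst nn_integral_add) (auto simp: nn_integral_cmult)
  also have "\<dots> \<le> ennreal (1 / l ^ (CARD('m) + k)) * ?J k + ennreal (\<epsilon> * (l - 1)) * ?J (Suc k)"
    using K by (rule add_right_mono)
  finally show ?thesis .
qed

lemma moment_step_lt:
  fixes \<Phi> :: "real^'m::finite^'n::finite \<Rightarrow> real" and i :: 'n and l \<epsilon> :: real and k :: nat
  assumes l: "0 < l" "l < 1" and e: "\<epsilon> > 0" and [measurable]: "\<Phi> \<in> borel_measurable borel"
    and nn: "\<And>x. \<Phi> x \<ge> 0"
    and sc: "\<And>x. \<Phi> (blk_scale i l x) \<ge> exp (- (\<epsilon> * (l - 1) * norm (x $ i))) * \<Phi> x"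
  shows "(\<integral>\<^sup>+x. ennreal (\<Phi> x * norm (x $ i) ^ k) \<partial>lborel)
      \<ge> ennreal (l ^ (CARD('m) + k)) * ((\<integral>\<^sup>+x. ennreal (\<Phi> x * norm (x $ i) ^ k) \<partial>lborel)
        + ennreal (\<epsilon> * (1 - l)) * (\<integral>\<^sup>+x. ennreal (\<Phi> x * norm (x $ i) ^ Suc k) \<partial>lborel))"
proof -
  let ?E = "\<lambda>x. exp (- (\<epsilon> * (l - 1) * norm (x $ i)))"
  let ?K = "\<integral>\<^sup>+x. ennreal (?E x * \<Phi> x * norm (x $ i) ^ k) \<partial>lborel"
  let ?J = "\<lambda>k. \<integral>\<^sup>+x. ennreal (\<Phi> x * norm (x $ i) ^ k) \<partial>lborel"
  have ge: "?J k \<ge> ennreal (l ^ (CARD('m) + k)) * ?K"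
    by (rule moment_step) (use l nn sc in auto)
  have "?J k + ennreal (\<epsilon> * (1 - l)) * ?J (Suc k) = (\<integral>\<^sup>+x. ennreal (\<Phi> x * norm (x $ i) ^ k) + ennreal (\<epsilon> * (1 - l)) * ennreal (\<Phi> x * norm (x $ i) ^ Suc k) \<partial>lborel)"
    by (subst nn_integral_add) (auto simp: nn_integral_cmult)
  also have "\<dots> \<le> ?K"
  proof (intro nn_integral_mono)
    fix x :: "real^'m^'n"
    have t: "1 + \<epsilon> * (1 - l) * norm (x $ i) \<le> ?E x"
      using exp_ge_add_one_self[of "- (\<epsilon> * (l - 1) * norm (x $ i))"] by (simp add: algebra_simps)
    have "\<Phi> x * norm (x $ i) ^ k + \<epsilon> * (1 - l) * (\<Phi> x * norm (x $ i) ^ Suc k) = (1 + \<epsilon> * (1 - l) * norm (x $ i)) * (\<Phi> x * norm (x $ i) ^ k)"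
      by (simp add: algebra_simps)
    also have "\<dots> \<le> ?E x * (\<Phi> x * norm (x $ i) ^ k)"
      using mult_right_mono[OF t, of "\<Phi> x * norm (x $ i) ^ k"] nn by simp
    finally show "ennreal (\<Phi> x * norm (x $ i) ^ k) + ennreal (\<epsilon> * (1 - l)) * ennreal (\<Phi> x * norm (x $ i) ^ Suc k) \<le> ennreal (?E x * \<Phi> x * norm (x $ i) ^ k)"
      using l e nn by (simp add: ennreal_mult'[symmetric] ennreal_plus[symmetric] mult.assoc del: ennreal_plus)
  qed
  finally have "?J k + ennreal (\<epsilon> * (1 - l)) * ?J (Suc k) \<le> ?K" .
  then show ?thesis using ge by (meson mult_left_mono order_trans zero_le)
qed


lemma lim_L1:
  fixes c d :: real and p :: nat
  assumes c: "c \<ge> 0" and H: "\<And>l. l > 1 \<Longrightarrow> c \<le> c / l ^ p + d * (l - 1)"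
  shows "real p * c \<le> d"
proof -
  have A: "real p * c \<le> d * l ^ p" if l: "l > 1" for l
  proof -
    have lp: "l ^ p > 0" using l by simp
    have "c * l ^ p \<le> (c / l ^ p + d * (l - 1)) * l ^ p"
      using H[OF l] lp by (intro mult_right_mono) auto
    also have "\<dots> = c + d * (l - 1) * l ^ p" using lp l by (simp add: field_simps)
    finally have 1: "c * l ^ p \<le> c + d * (l - 1) * l ^ p" .
    have "1 + real p * (l - 1) \<le> (1 + (l - 1)) ^ p"
      by (rule Bernoulli_inequality) (use l in auto)
    then have "c * (1 + real p * (l - 1)) \<le> c * l ^ p" using c by (intro mult_left_mono) auto
    with 1 have "(real p * c) * (l - 1) \<le> (d * l ^ p) * (l - 1)" by (simp add: algebra_simps)
    then show ?thesis using l by simp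
  qed
  have "((\<lambda>l. d * l ^ p) \<longlongrightarrow> d * 1 ^ p) (at_right 1)"
    by (intro tendsto_intros)
  then have T: "((\<lambda>l. d * l ^ p) \<longlongrightarrow> d) (at_right 1)" by simp
  show ?thesis
    by (rule tendsto_le[OF trivial_limit_at_right_real T tendsto_const])
       (rule eventually_mono[OF eventually_at_right_less], rule A)
qed

lemma lim_L2:
  fixes c d :: real and p :: nat
  assumes c: "c \<ge> 0" and d: "d \<ge> 0" and H: "\<And>l. 0 < l \<Longrightarrow> l < 1 \<Longrightarrow> l ^ p * (c + d * (1 - l)) \<le> c"
  shows "d \<le> real p * c"
proof -
  have A: "d \<le> real p * c + real p * h * d" if h: "0 < h" "h < 1" for h
  proof -
    have "1 + real p * (-h) \<le> (1 + (-h)) ^ p"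
      by (rule Bernoulli_inequality) (use h in auto)
    then have "(1 - real p * h) * (c + d * h) \<le> (1 - h) ^ p * (c + d * h)"
      using c d h by (intro mult_right_mono) auto
    also have "\<dots> \<le> c" using H[of "1 - h"] h by simp
    finally have "(1 - real p * h) * (c + d * h) \<le> c" .
    then have "h * d \<le> h * (real p * c + real p * h * d)" by (simp add: algebra_simps)
    then show ?thesis using h by simp
  qed
  have "((\<lambda>h. real p * c + real p * h * d) \<longlongrightarrow> real p * c + real p * 0 * d) (at_right 0)"
    by (intro tendsto_intros)
  then have T: "((\<lambda>h. real p * c + real p * h * d) \<longlongrightarrow> real p * c) (at_right 0)" by simp
  have ev: "eventually (\<lambda>h::real. 0 < h \<and> h < 1) (at_right 0)"
    by (simp add: eventually_at_right_less eventually_at_right_field) (rule exI[of _ 1], auto)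
  show ?thesis
    by (rule tendsto_le[OF trivial_limit_at_right_real T tendsto_const])
       (rule eventually_mono[OF ev], use A in auto)
qed


lemma blocknorm_nonneg: "blocknorm x \<ge> 0"
  unfolding blocknorm_def by (simp add: sum_nonneg)

lemma norm_nth_le_blocknorm: "norm (x $ i) \<le> blocknorm x"
  unfolding blocknorm_def by (rule member_le_sum) auto

lemma norm_le_blocknorm: "norm x \<le> blocknorm x"
  unfolding blocknorm_def norm_vec_def by (rule L2_set_le_sum) auto

lemma blocknorm_measurable[measurable]: "(blocknorm :: real^'m::finite^'n::finite \<Rightarrow> real) \<in> borel_measurable borel"
  unfolding blocknorm_def[abs_def] by measurable

lemma blocknorm_blk_scale:
  fixes x :: "real^'m::finite^'n::finite"
  assumes "l \<ge> 0"
  shows "blocknorm (blk_scale i l x) = blocknorm x + (l - 1) * norm (x $ i)"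
proof -
  have "blocknorm (blk_scale i l x) = (\<Sum>k\<in>UNIV. norm (x $ k) + (if k = i then (l - 1) * norm (x $ k) else 0))"
    unfolding blocknorm_def using assms by (intro sum.cong) (auto simp: blk_scale_nth algebra_simps)
  also have "\<dots> = blocknorm x + (l - 1) * norm (x $ i)"
    by (simp add: sum.distrib blocknorm_def)
  finally show ?thesis .
qed

lemma blocknorm_blk_scale_diff:
  fixes x :: "real^'m::finite^'n::finite"
  shows "blocknorm (blk_scale i l x - x) = \<bar>l - 1\<bar> * norm (x $ i)"
proof -
  have "blocknorm (blk_scale i l x - x) = (\<Sum>k\<in>UNIV. (if k = i then \<bar>l - 1\<bar> * norm (x $ k) else 0))"
  proof -
    have e: "norm (l *\<^sub>R y - y) = \<bar>l - 1\<bar> * norm y" for y :: "real^'m"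
      by (metis norm_scaleR scaleR_diff_left scaleR_one)
    show ?thesis unfolding blocknorm_def by (intro sum.cong) (auto simp: blk_scale_nth e)
  qed
  also have "\<dots> = \<bar>l - 1\<bar> * norm (x $ i)"
    by simp
  finally show ?thesis .
qed

lemma pow_le_fact_exp: "(y::real) \<ge> 0 \<Longrightarrow> y ^ k \<le> fact k * exp y"
proof -
  assume y: "y \<ge> 0"
  have "(\<Sum>n\<in>{k}. y ^ n /\<^sub>R fact n) \<le> (\<Sum>n. y ^ n /\<^sub>R fact n)"
    by (rule sum_le_suminf) (use y summable_exp_generic[of y] in auto)
  also have "\<dots> = exp y" by (simp add: exp_def)
  finally have "y ^ k / fact k \<le> exp y" by (simp add: divide_inverse mult.commute)
  then show ?thesis by (simp add: field_simps)
qed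

lemma exp_abs_finite:
  fixes a :: real assumes a: "a > 0"
  shows "(\<integral>\<^sup>+t. ennreal (exp (- (a * \<bar>t\<bar>))) \<partial>lborel) < \<infinity>"
proof -
  have I: "(\<integral>\<^sup>+x. ennreal (x^0 * exp (-x)) * indicator {0 ..} x \<partial>lborel) = 1"
    using nn_intergal_power_times_exp_Ici[of 0] by simp
  have eq1: "(\<integral>\<^sup>+t. ennreal (exp (- (a * \<bar>t\<bar>))) \<partial>lborel) = \<bar>1/a\<bar> * (\<integral>\<^sup>+x. ennreal (exp (- (a * \<bar>0 + 1/a * x\<bar>))) \<partial>lborel)"
    by (rule nn_integral_real_affine) (use a in auto)
  have "(\<integral>\<^sup>+x. ennreal (exp (- (a * \<bar>0 + 1/a * x\<bar>))) \<partial>lborel) = (\<integral>\<^sup>+x. ennreal (exp (- \<bar>x\<bar>)) \<partial>lborel)"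
    using a by (intro nn_integral_cong) (simp add: abs_mult)
  also have "\<dots> \<le> (\<integral>\<^sup>+x. ennreal (x^0 * exp (-x)) * indicator {0 ..} x + ennreal ((-x)^0 * exp (-(-x))) * indicator {0 ..} (-x) \<partial>lborel)"
    by (intro nn_integral_mono) (auto split: split_indicator)
  also have "\<dots> = (\<integral>\<^sup>+x. ennreal (x^0 * exp (-x)) * indicator {0 ..} x \<partial>lborel) + (\<integral>\<^sup>+x. ennreal ((-x)^0 * exp (-(-x))) * indicator {0 ..} (-x) \<partial>lborel)"
    by (rule nn_integral_add) auto
  also have "(\<integral>\<^sup>+x. ennreal ((-x)^0 * exp (-(-x))) * indicator {0 ..} (-x) \<partial>lborel) = 
     (\<integral>\<^sup>+x. ennreal (x^0 * exp (-x)) * indicator {0 ..} x \<partial>lborel)"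
    using nn_integral_real_affine[of "\<lambda>x. ennreal (x^0 * exp (-x)) * indicator {0 ..} x" "-1" 0] by simp
  finally have le0: "(\<integral>\<^sup>+x. ennreal (exp (- (a * \<bar>0 + 1/a * x\<bar>))) \<partial>lborel) \<le> (\<integral>\<^sup>+x. ennreal (x^0 * exp (-x)) * indicator {0 ..} x \<partial>lborel) + (\<integral>\<^sup>+x. ennreal (x^0 * exp (-x)) * indicator {0 ..} x \<partial>lborel)" .
  have le: "(\<integral>\<^sup>+t. ennreal (exp (- (a * \<bar>t\<bar>))) \<partial>lborel) \<le> ennreal \<bar>1/a\<bar> * ((\<integral>\<^sup>+x. ennreal (x^0 * exp (-x)) * indicator {0 ..} x \<partial>lborel) + (\<integral>\<^sup>+x. ennreal (x^0 * exp (-x)) * indicator {0 ..} x \<partial>lborel))"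
    unfolding eq1 by (rule mult_left_mono[OF le0]) simp
  have "ennreal \<bar>1/a\<bar> * ((\<integral>\<^sup>+x. ennreal (x^0 * exp (-x)) * indicator {0 ..} x \<partial>lborel) + (\<integral>\<^sup>+x. ennreal (x^0 * exp (-x)) * indicator {0 ..} x \<partial>lborel)) < \<infinity>"
    unfolding I by (simp add: ennreal_mult_less_top)
  with le show ?thesis by (rule le_less_trans)
qed

lemma exp_norm_finite:
  fixes c :: real assumes c: "c > 0"
  shows "(\<integral>\<^sup>+v. ennreal (exp (- (c * norm (v::'a::euclidean_space)))) \<partial>lborel) < \<infinity>"
proof -
  define a where "a = c / real DIM('a)"
  have a: "a > 0" using c by (simp add: a_def)
  have "(\<integral>\<^sup>+v. ennreal (exp (- (c * norm (v::'a)))) \<partial>lborel) \<le> (\<integral>\<^sup>+v. (\<Prod>b\<in>Basis. ennreal (exp (- (a * \<bar>(v::'a) \<bullet> b\<bar>)))) \<partial>lborel)"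
  proof (rule nn_integral_mono)
    fix v :: 'a
    have "(\<Sum>b\<in>Basis. \<bar>v \<bullet> b\<bar>) \<le> (\<Sum>b\<in>(Basis::'a set). norm v)"
      by (intro sum_mono Basis_le_norm)
    then have "a * (\<Sum>b\<in>(Basis::'a set). \<bar>v \<bullet> b\<bar>) \<le> a * (real DIM('a) * norm v)"
      using a by (intro mult_left_mono) auto
    then have "(\<Sum>b\<in>(Basis::'a set). a * \<bar>v \<bullet> b\<bar>) \<le> c * norm v"
      by (simp add: a_def sum_distrib_left)
    then have "exp (- (c * norm v)) \<le> exp (\<Sum>b\<in>(Basis::'a set). - (a * \<bar>v \<bullet> b\<bar>))"
      by (simp add: sum_negf)
    also have "\<dots> = (\<Prod>b\<in>Basis. exp (- (a * \<bar>v \<bullet> b\<bar>)))" by (simp add: exp_sum)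
    finally show "ennreal (exp (- (c * norm v))) \<le> (\<Prod>b\<in>Basis. ennreal (exp (- (a * \<bar>v \<bullet> b\<bar>))))"
      by (simp add: prod_ennreal ennreal_leI)
  qed
  also have "\<dots> = (\<Prod>b\<in>(Basis::'a set). (\<integral>\<^sup>+t. ennreal (exp (- (a * \<bar>t\<bar>))) \<partial>lborel))"
    by (rule nn_integral_lborel_prod[where f="\<lambda>b t. ennreal (exp (- (a * \<bar>t\<bar>)))"]) auto
  also have "\<dots> < \<infinity>"
    using exp_abs_finite[OF a] by (simp add: power_less_top_ennreal)
  finally show ?thesis .
qed


lemma exp_split: "a = b + c \<Longrightarrow> exp a = exp b * exp (c::real)"
  by (simp add: exp_add)

lemma moments_finite:
  fixes \<epsilon> :: real and i :: "'n::finite"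
  assumes e: "\<epsilon> > 0"
  shows "(\<integral>\<^sup>+v. ennreal (exp (- \<epsilon> * blocknorm v) * norm ((v::real^'m::finite^'n) $ i) ^ k) \<partial>lborel) < \<infinity>"
proof -
  define C where "C = (2 / \<epsilon>) ^ k * fact k"
  have "(\<integral>\<^sup>+v. ennreal (exp (- \<epsilon> * blocknorm v) * norm ((v::real^'m^'n) $ i) ^ k) \<partial>lborel)
     \<le> (\<integral>\<^sup>+v. ennreal C * ennreal (exp (- ((\<epsilon>/2) * norm (v::real^'m^'n)))) \<partial>lborel)"
  proof (rule nn_integral_mono)
    fix v :: "real^'m^'n"
    let ?b = "blocknorm v"
    have b0: "?b \<ge> 0" by (rule blocknorm_nonneg)
    have "norm (v $ i) ^ k \<le> ?b ^ k"
      by (intro power_mono norm_nth_le_blocknorm) auto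
    also have "?b ^ k = (2 / \<epsilon>) ^ k * (\<epsilon> * ?b / 2) ^ k"
      using e by (simp add: power_mult_distrib[symmetric])
    also have "\<dots> \<le> (2 / \<epsilon>) ^ k * (fact k * exp (\<epsilon> * ?b / 2))"
      using e b0 by (intro mult_left_mono pow_le_fact_exp) auto
    finally have 1: "norm (v $ i) ^ k \<le> C * exp (\<epsilon> * ?b / 2)" by (simp add: C_def mult_ac)
    have "exp (- \<epsilon> * ?b) * norm (v $ i) ^ k \<le> exp (- \<epsilon> * ?b) * (C * exp (\<epsilon> * ?b / 2))"
      using 1 by (intro mult_left_mono) auto
    also have "\<dots> = C * exp (- ((\<epsilon>/2) * ?b))"
    proof -
      have "exp (- ((\<epsilon>/2) * ?b)) = exp (- \<epsilon> * ?b) * exp (\<epsilon> * ?b / 2)"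
        by (rule exp_split) (simp add: field_simps)
      then show ?thesis by (simp add: mult_ac)
    qed
    also have "\<dots> \<le> C * exp (- ((\<epsilon>/2) * norm v))"
      using e norm_le_blocknorm[of v] by (intro mult_left_mono) (auto simp: C_def)
    finally show "ennreal (exp (- \<epsilon> * ?b) * norm (v $ i) ^ k) \<le> ennreal C * ennreal (exp (- ((\<epsilon>/2) * norm v)))"
      using e by (subst ennreal_mult[symmetric]) (auto intro!: ennreal_leI simp: C_def)
  qed
  also have "\<dots> = ennreal C * (\<integral>\<^sup>+v. ennreal (exp (- ((\<epsilon>/2) * norm (v::real^'m^'n)))) \<partial>lborel)"
    by (rule nn_integral_cmult) measurable
  also have "\<dots> < \<infinity>"
    using exp_norm_finite[of "\<epsilon>/2", where 'a="real^'m^'n"] e by (simp add: ennreal_mult_less_top)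
  finally show ?thesis .
qed

lemma lap_scale:
  fixes x :: "real^'m::finite^'n::finite"
  assumes "l > 0"
  shows "exp (- \<epsilon> * blocknorm (blk_scale i l x)) = exp (- (\<epsilon> * (l - 1) * norm (x $ i))) * exp (- \<epsilon> * blocknorm x)"
  using assms by (intro exp_split) (simp add: blocknorm_blk_scale algebra_simps)

lemma lap_moment_rec:
  fixes \<epsilon> :: real and i :: "'n::finite" and k :: nat
  assumes e: "\<epsilon> > 0"
  defines "J \<equiv> \<lambda>k. enn2real (\<integral>\<^sup>+v. ennreal (exp (- \<epsilon> * blocknorm v) * norm ((v::real^'m::finite^'n) $ i) ^ k) \<partial>lborel)"
  shows "\<epsilon> * J (Suc k) = real (CARD('m) + k) * J k"
proof -
  let ?\<Phi> = "\<lambda>v::real^'m^'n. exp (- \<epsilon> * blocknorm v)"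
  let ?I = "\<lambda>k. (\<integral>\<^sup>+v. ennreal (?\<Phi> v * norm ((v::real^'m::finite^'n) $ i) ^ k) \<partial>lborel)"
  have fin: "?I k = ennreal (J k)" for k
  proof -
    have "?I k < \<infinity>" by (rule moments_finite[OF e])
    then show ?thesis unfolding J_def by simp
  qed
  have J0: "\<And>k. J k \<ge> 0" unfolding J_def by simp
  have meas: "?\<Phi> \<in> borel_measurable borel" by measurable
  have sc: "\<And>l x. l > 0 \<Longrightarrow> ?\<Phi> (blk_scale i l x) \<ge> exp (- (\<epsilon> * (l - 1) * norm (x $ i))) * ?\<Phi> x"
  proof -
    fix l :: real and x :: "real^'m^'n" assume l: "l > 0"
    show "?\<Phi> (blk_scale i l x) \<ge> exp (- (\<epsilon> * (l - 1) * norm (x $ i))) * ?\<Phi> x"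
      using lap_scale[OF l, where \<epsilon>=\<epsilon> and i=i and x=x] by linarith
  qed
  have A: "J k \<le> J k / l ^ (CARD('m) + k) + \<epsilon> * J (Suc k) * (l - 1)" if l: "l > 1" for l
  proof -
    have "?I k \<le> ennreal (1 / l ^ (CARD('m) + k)) * ?I k + ennreal (\<epsilon> * (l - 1)) * ?I (Suc k)"
      by (rule moment_step_gt[OF l e meas]) (use sc l in auto)
    then have "ennreal (J k) \<le> ennreal (J k / l ^ (CARD('m) + k) + \<epsilon> * J (Suc k) * (l - 1))"
      unfolding fin using l e J0 by (simp add: ennreal_mult[symmetric] ennreal_plus[symmetric] mult_ac del: ennreal_plus)
    then show ?thesis using l e J0 by (subst (asm) ennreal_le_iff) (auto intro!: add_nonneg_nonneg)
  qed
  have B: "l ^ (CARD('m) + k) * (J k + \<epsilon> * J (Suc k) * (1 - l)) \<le> J k" if l: "0 < l" "l < 1" for l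
  proof -
    have "?I k \<ge> ennreal (l ^ (CARD('m) + k)) * (?I k + ennreal (\<epsilon> * (1 - l)) * ?I (Suc k))"
      by (rule moment_step_lt[OF l e meas]) (use sc l in auto)
    then have "ennreal (J k) \<ge> ennreal (l ^ (CARD('m) + k) * (J k + \<epsilon> * J (Suc k) * (1 - l)))"
      unfolding fin using l e J0 by (simp add: ennreal_mult[symmetric] ennreal_plus[symmetric] mult_ac del: ennreal_plus)
    then show ?thesis using l e J0 by (subst (asm) ennreal_le_iff) auto
  qed
  have 1: "real (CARD('m) + k) * J k \<le> \<epsilon> * J (Suc k)"
    by (rule lim_L1[OF J0]) (use A in auto)
  have 2: "\<epsilon> * J (Suc k) \<le> real (CARD('m) + k) * J k"
    by (rule lim_L2[OF J0]) (use B e J0 in auto)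
  from 1 2 show ?thesis by linarith
qed


lemma AE_lborel_False: "\<not> (AE x in (lborel::'a::euclidean_space measure). False)"
proof
  assume "AE x in (lborel::'a measure). False"
  then have "ae_filter (lborel::'a measure) = bot" using trivial_limit_def by blast
  then show False by (simp add: ae_filter_eq_bot_iff)
qed

lemma norm_sq_blocks: "norm (v::real^'m::finite^'n::finite) ^ 2 = (\<Sum>i\<in>UNIV. norm (v $ i) ^ 2)"
  unfolding norm_vec_def L2_set_def by (simp add: sum_nonneg)

lemma partA:
  fixes \<epsilon> :: real
  assumes e: "\<epsilon> > 0"
  shows "prob_space (density lborel (\<lambda>v::real^'m::finite^'n::finite. ennreal (lap_density \<epsilon> v)))
    \<and> (\<integral>\<^sup>+ v. ennreal (norm v ^ 2 * lap_density \<epsilon> v) \<partial>(lborel :: (real^'m^'n) measure))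
        = ennreal (real CARD('n) * real CARD('m) * (real CARD('m) + 1) / \<epsilon> ^ 2)"
proof -
  define J where "J \<equiv> \<lambda>i k. enn2real (\<integral>\<^sup>+v. ennreal (exp (- \<epsilon> * blocknorm v) * norm ((v::real^'m::finite^'n) $ i) ^ k) \<partial>lborel)"
  let ?f = "\<lambda>v::real^'m^'n. exp (- \<epsilon> * blocknorm v)"
  define Z where "Z = (\<integral>w. ?f w \<partial>lborel)"
  have fin: "(\<integral>\<^sup>+v. ennreal (?f v * norm (v $ i) ^ k) \<partial>lborel) = ennreal (J i k)" for i k
  proof -
    have "(\<integral>\<^sup>+v. ennreal (?f v * norm (v $ i) ^ k) \<partial>lborel) < \<infinity>" by (rule moments_finite[OF e])
    then show ?thesis unfolding J_def by simp
  qed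
  have J0: "J i k \<ge> 0" for i k unfolding J_def by simp
  have Zeq: "Z = J i 0" for i
    unfolding Z_def J_def by (subst integral_eq_nn_integral) auto
  have Zpos: "Z > 0"
  proof -
    obtain i :: 'n where True by simp
    have "(\<integral>\<^sup>+v. ennreal (?f v) \<partial>lborel) \<noteq> 0"
    proof
      assume "(\<integral>\<^sup>+v. ennreal (?f v) \<partial>lborel) = 0"
      then have "AE v in lborel. ennreal (?f v) = 0"
        by (subst (asm) nn_integral_0_iff_AE) auto
      then have "AE v in (lborel::(real^'m^'n) measure). False" by simp
      then show False using AE_lborel_False by blast
    qed
    then have "ennreal (J i 0) \<noteq> 0" using fin[of i 0] by simp
    then show ?thesis using Zeq[of i] J0[of i 0] by simp
  qed
  have ld: "lap_density \<epsilon> v = ?f v / Z" for v :: "real^'m^'n"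
    unfolding lap_density_def Z_def by simp
  have rec: "\<epsilon> * J i (Suc k) = real (CARD('m) + k) * J i k" for i k
    unfolding J_def by (rule lap_moment_rec[OF e])
  have P: "prob_space (density lborel (\<lambda>v::real^'m::finite^'n::finite. ennreal (lap_density \<epsilon> v)))"
  proof (rule prob_spaceI)
    obtain i :: 'n where True by simp
    have "emeasure (density lborel (\<lambda>v::real^'m::finite^'n::finite. ennreal (lap_density \<epsilon> v))) UNIV
        = (\<integral>\<^sup>+v. ennreal (?f v) * ennreal (1 / Z) \<partial>lborel)"
      using Zpos by (subst emeasure_density) (auto simp: ld ennreal_mult[symmetric] intro!: nn_integral_cong)
    also have "\<dots> = (\<integral>\<^sup>+v. ennreal (?f v) \<partial>lborel) * ennreal (1 / Z)"
      by (rule nn_integral_multc) measurable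
    also have "\<dots> = ennreal (Z * (1 / Z))"
      using fin[of i 0] Zeq[of i] Zpos by (simp add: ennreal_mult[symmetric])
    also have "\<dots> = 1" using Zpos by simp
    finally show "emeasure (density lborel (\<lambda>v::real^'m::finite^'n::finite. ennreal (lap_density \<epsilon> v))) (space (density lborel (\<lambda>v::real^'m::finite^'n::finite. ennreal (lap_density \<epsilon> v)))) = 1"
      by simp
  qed
  have each: "J i 2 / Z = real CARD('m) * (real CARD('m) + 1) / \<epsilon> ^ 2" for i
  proof -
    have 1: "\<epsilon> * J i 1 = real CARD('m) * J i 0" using rec[of i 0] by simp
    have 2: "\<epsilon> * J i 2 = (real CARD('m) + 1) * J i 1" using rec[of i 1] by (simp add: numeral_2_eq_2)
    have "\<epsilon> * \<epsilon> * J i 2 = (real CARD('m) + 1) * (\<epsilon> * J i 1)" using 2 by (simp add: algebra_simps)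
    also have "\<dots> = (real CARD('m) + 1) * real CARD('m) * Z" using 1 Zeq[of i] by simp
    finally have "\<epsilon> * \<epsilon> * J i 2 = (real CARD('m) + 1) * real CARD('m) * Z" .
    then show ?thesis using e Zpos by (simp add: field_simps power2_eq_square)
  qed
  have "(\<integral>\<^sup>+ v. ennreal (norm v ^ 2 * lap_density \<epsilon> v) \<partial>(lborel :: (real^'m^'n) measure))
      = (\<integral>\<^sup>+ v. (\<Sum>i\<in>UNIV. ennreal (?f v * norm (v $ i) ^ 2) * ennreal (1 / Z)) \<partial>lborel)"
  proof (rule nn_integral_cong)
    fix v :: "real^'m^'n"
    have "norm v ^ 2 * lap_density \<epsilon> v = (\<Sum>i\<in>UNIV. ?f v * norm (v $ i) ^ 2 * (1 / Z))"
      by (simp add: ld norm_sq_blocks sum_distrib_left sum_distrib_right mult_ac)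
    then show "ennreal (norm v ^ 2 * lap_density \<epsilon> v) = (\<Sum>i\<in>UNIV. ennreal (?f v * norm (v $ i) ^ 2) * ennreal (1 / Z))"
      using Zpos by (simp add: ennreal_mult[symmetric] sum_nonneg)
  qed
  also have "\<dots> = (\<Sum>i\<in>UNIV. (\<integral>\<^sup>+ v. ennreal (?f v * norm (v $ i) ^ 2) * ennreal (1 / Z) \<partial>lborel))"
    by (rule nn_integral_sum) measurable
  also have "\<dots> = (\<Sum>i\<in>(UNIV::'n set). ennreal (real CARD('m) * (real CARD('m) + 1) / \<epsilon> ^ 2))"
  proof (rule sum.cong[OF refl])
    fix i :: 'n
    have "(\<integral>\<^sup>+ v. ennreal (?f v * norm (v $ i) ^ 2) * ennreal (1 / Z) \<partial>lborel) = ennreal (J i 2) * ennreal (1 / Z)"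
      using fin[of i 2] by (subst nn_integral_multc) auto
    also have "\<dots> = ennreal (J i 2 / Z)" using Zpos J0[of i 2] by (simp add: ennreal_mult[symmetric])
    finally show "(\<integral>\<^sup>+ v. ennreal (?f v * norm (v $ i) ^ 2) * ennreal (1 / Z) \<partial>lborel) = ennreal (real CARD('m) * (real CARD('m) + 1) / \<epsilon> ^ 2)"
      by (simp add: each)
  qed
  also have "\<dots> = ennreal (real CARD('n) * real CARD('m) * (real CARD('m) + 1) / \<epsilon> ^ 2)"
    by (simp add: ennreal_of_nat_eq_real_of_nat ennreal_mult[symmetric])
  finally show ?thesis using P by simp
qed


lemma priv_ball:
  fixes g :: "(real^'m::finite^'n::finite) measure"
  assumes sg: "sets g = sets borel" and lp: "lipschitz_private \<epsilon> blocknorm (additive_mech g)"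
  shows "measure g (ball x \<delta>) \<le> exp (\<epsilon> * blocknorm w) * measure g (ball (x + w) \<delta>)"
proof -
  have sp: "space g = UNIV" using sets_eq_imp_space_eq[OF sg] by simp
  have m: "(\<lambda>v. u + v) \<in> measurable g borel" for u :: "real^'m^'n"
    by (subst measurable_cong_sets[OF sg refl]) measurable
  have "measure (additive_mech g 0) (ball x \<delta>) \<le> exp (\<epsilon> * blocknorm (0 - (- w))) * measure (additive_mech g (- w)) (ball x \<delta>)"
  proof -
    have bS: "ball x \<delta> \<in> sets borel" by auto
    show ?thesis using lp bS unfolding lipschitz_private_def by blast
  qed
  moreover have "measure (additive_mech g 0) (ball x \<delta>) = measure g (ball x \<delta>)"
  proof -
    have e: "(\<lambda>v. 0 + v) -` ball x \<delta> \<inter> space g = ball x \<delta>" by (auto simp: sp)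
    show ?thesis unfolding additive_mech_def by (subst measure_distr[OF m]) (auto simp only: e, simp)
  qed
  moreover have "measure (additive_mech g (- w)) (ball x \<delta>) = measure g (ball (x + w) \<delta>)"
  proof -
    have e: "(\<lambda>v. - w + v) -` ball x \<delta> \<inter> space g = ball (x + w) \<delta>"
      by (auto simp: sp dist_norm algebra_simps)
    show ?thesis unfolding additive_mech_def by (subst measure_distr[OF m]) (auto simp only: e, simp)
  qed
  ultimately show ?thesis by simp
qed

lemma ind_meas:
  fixes \<delta> :: real
  shows "(\<lambda>p::('a::euclidean_space \<times> 'a). indicator {p. dist (fst p) (snd p) < \<delta>} p :: ennreal) \<in> borel_measurable borel"
proof -
  have "{p::('a \<times> 'a). dist (fst p) (snd p) < \<delta>} \<in> sets borel"
    by (rule borel_open) (intro open_Collect_less continuous_intros)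
  then show ?thesis by measurable
qed

lemma prod_meas_cong:
  fixes g :: "('a::euclidean_space) measure" and M :: "('a) measure"
  assumes "sets g = sets borel" "sets M = sets borel"
  shows "borel_measurable (M \<Otimes>\<^sub>M g) = (borel_measurable borel :: (('a \<times> 'a) \<Rightarrow> ennreal) set)"
proof -
  have "sets (M \<Otimes>\<^sub>M g) = sets (borel \<Otimes>\<^sub>M borel :: ('a \<times> 'a) measure)"
    using assms by (intro sets_pair_measure_cong) auto
  also have "\<dots> = sets (borel :: ('a \<times> 'a) measure)" by (metis borel_prod)
  finally show ?thesis by (intro measurable_cong_sets) auto
qed

lemma P_meas:
  fixes g :: "(real^'m::finite^'n::finite) measure"
  assumes sg: "sets g = sets borel" and pg: "prob_space g"
  shows "(\<lambda>x. measure g (ball x \<delta>)) \<in> borel_measurable borel"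
proof -
  interpret g: prob_space g by fact
  have eq: "measure g (ball x \<delta>) = enn2real (\<integral>\<^sup>+y. indicator {p. dist (fst p) (snd p) < \<delta>} (x, y) \<partial>g)" for x
  proof -
    have "(\<integral>\<^sup>+y. indicator {p. dist (fst p) (snd p) < \<delta>} (x, y) \<partial>g) = (\<integral>\<^sup>+y. indicator (ball x \<delta>) y \<partial>g)"
      by (intro nn_integral_cong) (auto simp: indicator_def)
    also have "\<dots> = emeasure g (ball x \<delta>)"
      using sg by (intro nn_integral_indicator) auto
    finally show ?thesis by (simp add: g.emeasure_eq_measure)
  qed
  have "(\<lambda>x. \<integral>\<^sup>+y. indicator {p. dist (fst p) (snd p) < \<delta>} (x, y) \<partial>g) \<in> borel_measurable borel"
  proof (rule g.borel_measurable_nn_integral)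
    show "(\<lambda>(x, y). indicator {p. dist (fst p) (snd p) < \<delta>} (x, y) :: ennreal) \<in> borel_measurable (borel \<Otimes>\<^sub>M g)"
      using ind_meas[of \<delta>, where 'a="real^'m^'n"] prod_meas_cong[OF sg, of borel] by simp
  qed
  then show ?thesis unfolding eq by measurable
qed


lemma tonelli_P:
  fixes g :: "(real^'m::finite^'n::finite) measure" and h :: "real^'m^'n \<Rightarrow> real"
  assumes sg: "sets g = sets borel" and pg: "prob_space g"
    and hm[measurable]: "h \<in> borel_measurable borel" and h0: "\<And>x. h x \<ge> 0"
  shows "(\<integral>\<^sup>+ x. ennreal (measure g (ball x \<delta>) * h x) \<partial>lborel)
       = (\<integral>\<^sup>+ y. (\<integral>\<^sup>+ x. indicator (ball y \<delta>) x * ennreal (h x) \<partial>lborel) \<partial>g)"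
proof -
  interpret g: prob_space g by fact
  interpret p: pair_sigma_finite lborel g
    by (intro pair_sigma_finite.intro sigma_finite_lborel g.sigma_finite_measure_axioms)
  let ?D = "{p::(real^'m^'n) \<times> (real^'m^'n). dist (fst p) (snd p) < \<delta>}"
  let ?F = "\<lambda>x y. indicator ?D (x, y) * ennreal (h x)"
  have fm: "(\<lambda>p::(real^'m^'n) \<times> (real^'m^'n). fst p) \<in> borel \<rightarrow>\<^sub>M borel"
    by (intro borel_measurable_continuous_onI continuous_intros)
  have hf: "(\<lambda>p::(real^'m^'n) \<times> (real^'m^'n). h (fst p)) \<in> borel_measurable borel"
    using measurable_compose[OF fm hm] by simp
  have "(\<lambda>p. indicator ?D p * ennreal (h (fst p))) \<in> borel_measurable borel"
    using ind_meas[of \<delta>, where 'a="real^'m^'n"] hf by measurable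
  then have Fm: "case_prod ?F \<in> borel_measurable (lborel \<Otimes>\<^sub>M g)"
    using prod_meas_cong[OF sg sets_lborel] by (simp add: case_prod_beta')
  have "(\<integral>\<^sup>+ y. (\<integral>\<^sup>+ x. ?F x y \<partial>lborel) \<partial>g) = (\<integral>\<^sup>+ x. (\<integral>\<^sup>+ y. ?F x y \<partial>g) \<partial>lborel)"
    by (rule p.Fubini'[OF Fm])
  moreover have "(\<integral>\<^sup>+ y. ?F x y \<partial>g) = ennreal (measure g (ball x \<delta>) * h x)" for x
  proof -
    have "(\<integral>\<^sup>+ y. ?F x y \<partial>g) = (\<integral>\<^sup>+ y. ennreal (h x) * indicator (ball x \<delta>) y \<partial>g)"
      by (intro nn_integral_cong) (auto simp: indicator_def)
    also have "\<dots> = ennreal (h x) * emeasure g (ball x \<delta>)"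
      using sg by (subst nn_integral_cmult_indicator) auto
    also have "\<dots> = ennreal (measure g (ball x \<delta>) * h x)"
      using h0 by (simp add: g.emeasure_eq_measure ennreal_mult[symmetric] mult.commute)
    finally show ?thesis .
  qed
  moreover have "?F x y = indicator (ball y \<delta>) x * ennreal (h x)" for x y
    by (auto simp: indicator_def dist_commute)
  ultimately show ?thesis by simp
qed

lemma ball_measure:
  fixes y :: "'a::euclidean_space"
  shows "emeasure lborel (ball y \<delta>) = ennreal (measure lborel (ball (0::'a) \<delta>))"
proof -
  have "emeasure lborel (ball y \<delta>) = emeasure (distr lborel borel ((+) y)) (ball y \<delta>)"
    by (simp add: lborel_distr_plus)
  also have "\<dots> = emeasure lborel ((+) y -` ball y \<delta> \<inter> space lborel)"
    by (rule emeasure_distr) auto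
  also have "(+) y -` ball y \<delta> \<inter> space lborel = ball 0 \<delta>"
    by (auto simp: dist_norm)
  also have "emeasure lborel (ball (0::'a) \<delta>) = ennreal (measure lborel (ball (0::'a) \<delta>))"
    using emeasure_lborel_ball_finite[of "0::'a" \<delta>] by (simp add: measure_def)
  finally show ?thesis .
qed

lemma inner_upper:
  fixes y :: "real^'m::finite^'n::finite" and \<delta> :: real
  assumes d: "\<delta> > 0"
  shows "(\<integral>\<^sup>+ x. indicator (ball y \<delta>) x * ennreal (norm (x $ i) ^ k) \<partial>lborel)
     \<le> ennreal ((norm (y $ i) + \<delta>) ^ k) * ennreal (measure lborel (ball (0::real^'m^'n) \<delta>))"
proof -
  have "(\<integral>\<^sup>+ x. indicator (ball y \<delta>) x * ennreal (norm (x $ i) ^ k) \<partial>lborel)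
     \<le> (\<integral>\<^sup>+ x. ennreal ((norm (y $ i) + \<delta>) ^ k) * indicator (ball y \<delta>) x \<partial>lborel)"
  proof (intro nn_integral_mono)
    fix x :: "real^'m^'n"
    show "indicator (ball y \<delta>) x * ennreal (norm (x $ i) ^ k) \<le> ennreal ((norm (y $ i) + \<delta>) ^ k) * indicator (ball y \<delta>) x"
    proof (cases "x \<in> ball y \<delta>")
      case True
      have "norm (x $ i) \<le> norm (y $ i) + norm ((x - y) $ i)"
        by (metis add.commute diff_add_cancel norm_triangle_ineq vector_minus_component)
      also have "norm ((x - y) $ i) \<le> norm (x - y)" by (rule Finite_Cartesian_Product.norm_nth_le)
      also have "norm (x - y) < \<delta>" using True by (simp add: dist_norm norm_minus_commute)
      finally have "norm (x $ i) \<le> norm (y $ i) + \<delta>" by simp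
      then have "norm (x $ i) ^ k \<le> (norm (y $ i) + \<delta>) ^ k" by (intro power_mono) auto
      then show ?thesis using True by (simp add: ennreal_leI)
    qed simp
  qed
  also have "\<dots> = ennreal ((norm (y $ i) + \<delta>) ^ k) * emeasure lborel (ball y \<delta>)"
    by (subst nn_integral_cmult_indicator) auto
  also have "\<dots> = ennreal ((norm (y $ i) + \<delta>) ^ k) * ennreal (measure lborel (ball (0::real^'m^'n) \<delta>))"
    by (simp add: ball_measure)
  finally show ?thesis .
qed

lemma inner_lower:
  fixes y :: "real^'m::finite^'n::finite" and \<delta> :: real
  assumes d: "\<delta> > 0"
  shows "ennreal (norm (y $ i)) * ennreal (measure lborel (ball (0::real^'m^'n) \<delta>))
     \<le> (\<integral>\<^sup>+ x. indicator (ball y \<delta>) x * ennreal (norm (x $ i)) \<partial>lborel) + ennreal \<delta> * ennreal (measure lborel (ball (0::real^'m^'n) \<delta>))"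
proof -
  have "ennreal (norm (y $ i)) * ennreal (measure lborel (ball (0::real^'m^'n) \<delta>)) = (\<integral>\<^sup>+ x. ennreal (norm (y $ i)) * indicator (ball y \<delta>) x \<partial>lborel)"
    by (subst nn_integral_cmult_indicator) (auto simp: ball_measure)
  also have "\<dots> \<le> (\<integral>\<^sup>+ x. indicator (ball y \<delta>) x * ennreal (norm (x $ i)) + ennreal \<delta> * indicator (ball y \<delta>) x \<partial>lborel)"
  proof (intro nn_integral_mono)
    fix x :: "real^'m^'n"
    show "ennreal (norm (y $ i)) * indicator (ball y \<delta>) x \<le> indicator (ball y \<delta>) x * ennreal (norm (x $ i)) + ennreal \<delta> * indicator (ball y \<delta>) x"
    proof (cases "x \<in> ball y \<delta>")
      case True
      have "norm (y $ i) \<le> norm (x $ i) + norm ((y - x) $ i)"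
        by (metis add.commute diff_add_cancel norm_triangle_ineq vector_minus_component)
      also have "norm ((y - x) $ i) \<le> norm (y - x)" by (rule Finite_Cartesian_Product.norm_nth_le)
      also have "norm (y - x) < \<delta>" using True by (simp add: dist_norm)
      finally have "norm (y $ i) \<le> norm (x $ i) + \<delta>" by simp
      then show ?thesis using True d by (simp add: ennreal_plus[symmetric] del: ennreal_plus)
    qed simp
  qed
  also have "\<dots> = (\<integral>\<^sup>+ x. indicator (ball y \<delta>) x * ennreal (norm (x $ i)) \<partial>lborel) + ennreal \<delta> * ennreal (measure lborel (ball (0::real^'m^'n) \<delta>))"
  proof -
    have [measurable]: "ball y \<delta> \<in> sets borel" by auto
    have m1: "(\<lambda>x. indicator (ball y \<delta>) x * ennreal (norm (x $ i))) \<in> borel_measurable lborel" by simp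
    have m2: "(\<lambda>x. ennreal \<delta> * indicator (ball y \<delta>) x) \<in> borel_measurable lborel" by simp
    show ?thesis by (simp add: nn_integral_add[OF m1 m2] nn_integral_cmult_indicator ball_measure)
  qed
  finally show ?thesis .
qed


lemma eps_lim:
  fixes x y c :: real
  assumes H: "\<And>d. 0 < d \<Longrightarrow> d < 1 \<Longrightarrow> x \<le> y + c * d"
  shows "x \<le> y"
proof -
  have "((\<lambda>d. y + c * d) \<longlongrightarrow> y + c * 0) (at_right 0)" by (intro tendsto_intros)
  then have T: "((\<lambda>d. y + c * d) \<longlongrightarrow> y) (at_right 0)" by simp
  have ev: "eventually (\<lambda>h::real. 0 < h \<and> h < 1) (at_right 0)"
    by (simp add: eventually_at_right_less eventually_at_right_field) (rule exI[of _ 1], auto)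
  show ?thesis
    by (rule tendsto_le[OF trivial_limit_at_right_real T tendsto_const])
       (rule eventually_mono[OF ev], use H in auto)
qed

lemma inner_meas:
  fixes g :: "(real^'m::finite^'n::finite) measure" and h :: "real^'m^'n \<Rightarrow> real"
  assumes sg: "sets g = sets borel" and hm[measurable]: "h \<in> borel_measurable borel"
  shows "(\<lambda>y. \<integral>\<^sup>+ x. indicator (ball y \<delta>) x * ennreal (h x) \<partial>lborel) \<in> borel_measurable g"
proof -
  let ?D = "{p::(real^'m^'n) \<times> (real^'m^'n). dist (fst p) (snd p) < \<delta>}"
  have fm: "(\<lambda>p::(real^'m^'n) \<times> (real^'m^'n). snd p) \<in> borel \<rightarrow>\<^sub>M borel"
    by (intro borel_measurable_continuous_onI continuous_intros)
  have hf: "(\<lambda>p::(real^'m^'n) \<times> (real^'m^'n). h (snd p)) \<in> borel_measurable borel"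
    using measurable_compose[OF fm hm] by simp
  have "(\<lambda>p. indicator ?D p * ennreal (h (snd p))) \<in> borel_measurable borel"
    using ind_meas[of \<delta>, where 'a="real^'m^'n"] hf by measurable
  then have Fm: "(\<lambda>(y, x). indicator ?D (y, x) * ennreal (h x)) \<in> borel_measurable (g \<Otimes>\<^sub>M lborel)"
    using prod_meas_cong[OF sets_lborel sg] by (simp add: case_prod_beta')
  have "(\<lambda>y. \<integral>\<^sup>+ x. indicator ?D (y, x) * ennreal (h x) \<partial>lborel) \<in> borel_measurable g"
    by (rule lborel.borel_measurable_nn_integral[OF Fm])
  moreover have "indicator ?D (y, x) = (indicator (ball y \<delta>) x :: ennreal)" for x y
    by (auto simp: indicator_def)
  ultimately show ?thesis by simp
qed

lemma stage_delta:
  fixes \<epsilon> \<delta> l :: real and g :: "(real^'m::finite^'n::finite) measure" and i :: 'n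
  assumes e: "\<epsilon> > 0" and pg: "prob_space g" and sg: "sets g = sets borel"
    and lp: "lipschitz_private \<epsilon> blocknorm (additive_mech g)"
    and d: "\<delta> > 0" and l: "l > 1"
    and A1: "(\<integral>\<^sup>+ v. ennreal (norm (v $ i)) \<partial>g) = ennreal a" and a0: "a \<ge> 0"
    and A2: "(\<integral>\<^sup>+ v. ennreal (norm (v $ i) ^ 2) \<partial>g) = ennreal a2" and a20: "a2 \<ge> 0"
  shows "1 \<le> 1 / l ^ CARD('m) + \<epsilon> * (l - 1) * (a + \<delta>)"
    and "(a - \<delta>) * (1 - 1 / l ^ (CARD('m) + 1)) \<le> \<epsilon> * (l - 1) * (a2 + 2 * \<delta> * a + \<delta>^2)"
proof -
  interpret g: prob_space g by fact
  define b0 where "b0 = measure lborel (ball (0::real^'m^'n) \<delta>)"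
  have b0: "b0 > 0" unfolding b0_def using content_ball_pos[OF d] by simp
  define P where "P x = measure g (ball x \<delta>)" for x :: "real^'m^'n"
  have Pm[measurable]: "P \<in> borel_measurable borel" unfolding P_def[abs_def] by (rule P_meas[OF sg pg])
  have P0: "P x \<ge> 0" for x unfolding P_def by simp
  define J where "J k = (\<integral>\<^sup>+ x. ennreal (P x * norm (x $ i) ^ k) \<partial>lborel)" for k
  have ton: "J k = (\<integral>\<^sup>+ y. (\<integral>\<^sup>+ x. indicator (ball y \<delta>) x * ennreal (norm (x $ i) ^ k) \<partial>lborel) \<partial>g)" for k
    unfolding J_def P_def by (rule tonelli_P[OF sg pg]) auto
  have sc: "P (blk_scale i l x) \<ge> exp (- (\<epsilon> * (l - 1) * norm (x $ i))) * P x" for x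
  proof -
    have "P x \<le> exp (\<epsilon> * blocknorm (blk_scale i l x - x)) * P (x + (blk_scale i l x - x))"
      unfolding P_def by (rule priv_ball[OF sg lp])
    also have "blocknorm (blk_scale i l x - x) = (l - 1) * norm (x $ i)"
      using l by (simp add: blocknorm_blk_scale_diff)
    finally have "P x \<le> exp (\<epsilon> * ((l - 1) * norm (x $ i))) * P (blk_scale i l x)" by simp
    then have "exp (- (\<epsilon> * (l - 1) * norm (x $ i))) * P x \<le> exp (- (\<epsilon> * (l - 1) * norm (x $ i))) * (exp (\<epsilon> * ((l - 1) * norm (x $ i))) * P (blk_scale i l x))"
      by (intro mult_left_mono) auto
    also have "\<dots> = P (blk_scale i l x)"
      by (simp add: mult.assoc[symmetric] exp_add[symmetric])
    finally show ?thesis .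
  qed
  have step: "J k \<le> ennreal (1 / l ^ (CARD('m) + k)) * J k + ennreal (\<epsilon> * (l - 1)) * J (Suc k)" for k
    unfolding J_def by (rule moment_step_gt[OF l e Pm P0 sc])
  have gconst: "(\<integral>\<^sup>+ y. ennreal c \<partial>g) = ennreal c" for c
    by (simp add: g.emeasure_space_1)
  have J0: "J 0 = ennreal b0"
  proof -
    have "J 0 = (\<integral>\<^sup>+ y. ennreal b0 \<partial>g)"
      unfolding ton b0_def by (intro nn_integral_cong) (simp add: nn_integral_indicator ball_measure del: nn_integral_indicator_singleton)
    then show ?thesis using g.emeasure_space_1 by simp
  qed
  have J1u: "J 1 \<le> ennreal ((a + \<delta>) * b0)"
  proof -
    have "J 1 \<le> (\<integral>\<^sup>+ y. ennreal ((norm (y $ i) + \<delta>) ^ 1) * ennreal b0 \<partial>g)"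
      unfolding ton b0_def by (intro nn_integral_mono inner_upper d)
    also have "\<dots> = (\<integral>\<^sup>+ y. (ennreal (norm (y $ i)) + ennreal \<delta>) * ennreal b0 \<partial>g)"
      using d by (intro nn_integral_cong) simp
    also have "\<dots> = ((\<integral>\<^sup>+ y. ennreal (norm (y $ i)) \<partial>g) + ennreal \<delta>) * ennreal b0"
      using sg by (simp add: nn_integral_multc nn_integral_add gconst g.emeasure_space_1 measurable_cong_sets[OF sg refl])
    also have "\<dots> = ennreal ((a + \<delta>) * b0)"
      using a0 d b0 by (simp add: A1 ennreal_mult)
    finally show ?thesis .
  qed
  have J1l: "ennreal (a * b0) \<le> J 1 + ennreal (\<delta> * b0)"
  proof -
    have "ennreal (a * b0) = (\<integral>\<^sup>+ y. ennreal (norm (y $ i)) * ennreal b0 \<partial>g)"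
      using a0 b0 by (simp add: nn_integral_multc A1 ennreal_mult measurable_cong_sets[OF sg refl])
    also have "\<dots> \<le> (\<integral>\<^sup>+ y. (\<integral>\<^sup>+ x. indicator (ball y \<delta>) x * ennreal (norm (x $ i) ^ 1) \<partial>lborel) + ennreal \<delta> * ennreal b0 \<partial>g)"
      unfolding b0_def using inner_lower[OF d] by (intro nn_integral_mono) simp
    also have "\<dots> = J 1 + ennreal (\<delta> * b0)"
      unfolding ton using d b0 inner_meas[OF sg, of "\<lambda>x. norm (x $ i)" \<delta>]
      by (subst nn_integral_add) (auto simp: gconst g.emeasure_space_1 ennreal_mult)
    finally show ?thesis .
  qed
  have J2u: "J 2 \<le> ennreal ((a2 + 2 * \<delta> * a + \<delta>^2) * b0)"
  proof -
    have "J 2 \<le> (\<integral>\<^sup>+ y. ennreal ((norm (y $ i) + \<delta>) ^ 2) * ennreal b0 \<partial>g)"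
      unfolding ton b0_def by (intro nn_integral_mono inner_upper d)
    also have "\<dots> = (\<integral>\<^sup>+ y. (ennreal (norm (y $ i) ^ 2) + ennreal (2 * \<delta>) * ennreal (norm (y $ i)) + ennreal (\<delta>^2)) * ennreal b0 \<partial>g)"
    proof (intro nn_integral_cong)
      fix y :: "real^'m^'n"
      have e1: "(norm (y $ i) + \<delta>) ^ 2 = norm (y $ i) ^ 2 + (2 * \<delta>) * norm (y $ i) + \<delta>^2"
        by (simp add: power2_sum algebra_simps)
      show "ennreal ((norm (y $ i) + \<delta>) ^ 2) * ennreal b0 = (ennreal (norm (y $ i) ^ 2) + ennreal (2 * \<delta>) * ennreal (norm (y $ i)) + ennreal (\<delta>^2)) * ennreal b0"
        unfolding e1 using d by (simp add: ennreal_mult)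
    qed
    also have "\<dots> = ((\<integral>\<^sup>+ y. ennreal (norm (y $ i) ^ 2) \<partial>g) + ennreal (2 * \<delta>) * (\<integral>\<^sup>+ y. ennreal (norm (y $ i)) \<partial>g) + ennreal (\<delta>^2)) * ennreal b0"
      using sg by (simp add: nn_integral_multc nn_integral_add nn_integral_cmult gconst g.emeasure_space_1 measurable_cong_sets[OF sg refl])
    also have "\<dots> = ennreal ((a2 + 2 * \<delta> * a + \<delta>^2) * b0)"
      using a0 a20 d b0 by (simp add: A1 A2 ennreal_mult)
    finally show ?thesis .
  qed
  have "ennreal b0 = J 0" using J0 by simp
  also have "J 0 \<le> ennreal (1 / l ^ CARD('m)) * J 0 + ennreal (\<epsilon> * (l - 1)) * J 1"
    using step[of 0] by simp
  also have "\<dots> \<le> ennreal (1 / l ^ CARD('m)) * ennreal b0 + ennreal (\<epsilon> * (l - 1)) * ennreal ((a + \<delta>) * b0)"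
    unfolding J0 by (intro add_left_mono mult_left_mono J1u) auto
  also have "\<dots> = ennreal (b0 / l ^ CARD('m) + \<epsilon> * (l - 1) * ((a + \<delta>) * b0))"
    using l e a0 d b0 by (simp add: ennreal_mult[symmetric] ennreal_plus[symmetric] del: ennreal_plus)
  finally have "b0 \<le> b0 / l ^ CARD('m) + \<epsilon> * (l - 1) * ((a + \<delta>) * b0)"
    using l e a0 d b0 by (subst (asm) ennreal_le_iff) (auto intro!: add_nonneg_nonneg mult_nonneg_nonneg)
  then have "b0 * 1 \<le> b0 * (1 / l ^ CARD('m) + \<epsilon> * (l - 1) * (a + \<delta>))"
    by (simp add: algebra_simps)
  then show "1 \<le> 1 / l ^ CARD('m) + \<epsilon> * (l - 1) * (a + \<delta>)"
    using b0 by (simp only: mult_le_cancel_left_pos)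
  have J1fin: "J 1 < \<infinity>" using J1u by (simp add: le_less_trans)
  define j1 where "j1 = enn2real (J 1)"
  have J1eq: "J 1 = ennreal j1" unfolding j1_def using J1fin by simp
  have j10: "j1 \<ge> 0" unfolding j1_def by simp
  have "ennreal j1 = J 1" using J1eq by simp
  also have "J 1 \<le> ennreal (1 / l ^ (CARD('m) + 1)) * J 1 + ennreal (\<epsilon> * (l - 1)) * J 2"
    using step[of 1] by (simp add: numeral_2_eq_2)
  also have "\<dots> \<le> ennreal (1 / l ^ (CARD('m) + 1)) * ennreal j1 + ennreal (\<epsilon> * (l - 1)) * ennreal ((a2 + 2 * \<delta> * a + \<delta>^2) * b0)"
    unfolding J1eq by (intro add_left_mono mult_left_mono J2u) auto
  also have "\<dots> = ennreal (j1 / l ^ (CARD('m) + 1) + \<epsilon> * (l - 1) * ((a2 + 2 * \<delta> * a + \<delta>^2) * b0))"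
    using l e a0 a20 d b0 j10 by (simp add: ennreal_mult[symmetric] ennreal_plus[symmetric] del: ennreal_plus)
  finally have k1: "j1 \<le> j1 / l ^ (CARD('m) + 1) + \<epsilon> * (l - 1) * ((a2 + 2 * \<delta> * a + \<delta>^2) * b0)"
    using l e a0 a20 d b0 j10 by (subst (asm) ennreal_le_iff) (auto intro!: add_nonneg_nonneg mult_nonneg_nonneg)
  have low: "a * b0 \<le> j1 + \<delta> * b0"
    using J1l unfolding J1eq using j10 d b0 by (simp add: ennreal_plus[symmetric] del: ennreal_plus)
  define q where "q = 1 / l ^ (CARD('m) + 1)"
  have lp: "l ^ (CARD('m) + 1) \<ge> 1" using l by (intro one_le_power) auto
  have q: "0 \<le> 1 - q" "q \<ge> 0" using lp by (auto simp: q_def)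
  have "j1 * (1 - q) \<le> \<epsilon> * (l - 1) * ((a2 + 2 * \<delta> * a + \<delta>^2) * b0)"
    using k1 by (simp add: q_def algebra_simps)
  moreover have "(a - \<delta>) * b0 * (1 - q) \<le> j1 * (1 - q)"
    using low q by (intro mult_right_mono) (auto simp: algebra_simps)
  ultimately have "b0 * ((a - \<delta>) * (1 - q)) \<le> b0 * (\<epsilon> * (l - 1) * (a2 + 2 * \<delta> * a + \<delta>^2))"
    by (simp add: algebra_simps)
  then show "(a - \<delta>) * (1 - 1 / l ^ (CARD('m) + 1)) \<le> \<epsilon> * (l - 1) * (a2 + 2 * \<delta> * a + \<delta>^2)"
    using b0 unfolding q_def by (simp only: mult_le_cancel_left_pos)
qed


lemma block_lower:
  fixes \<epsilon> :: real and g :: "(real^'m::finite^'n::finite) measure" and i :: 'n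
  assumes e: "\<epsilon> > 0" and pg: "prob_space g" and sg: "sets g = sets borel"
    and lp: "lipschitz_private \<epsilon> blocknorm (additive_mech g)"
  shows "ennreal (real CARD('m) * (real CARD('m) + 1) / \<epsilon> ^ 2) \<le> (\<integral>\<^sup>+ v. ennreal (norm (v $ i) ^ 2) \<partial>g)"
proof (cases "(\<integral>\<^sup>+ v. ennreal (norm (v $ i) ^ 2) \<partial>g) = \<infinity>")
  case True then show ?thesis by simp
next
  case False
  interpret g: prob_space g by fact
  have m1: "(\<lambda>v. ennreal (norm (v $ i))) \<in> borel_measurable g"
    by (subst measurable_cong_sets[OF sg refl]) measurable
  have m2: "(\<lambda>v. ennreal (norm (v $ i) ^ 2)) \<in> borel_measurable g"
    by (subst measurable_cong_sets[OF sg refl]) measurable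
  have A2f: "(\<integral>\<^sup>+ v. ennreal (norm (v $ i) ^ 2) \<partial>g) < \<infinity>" using False by (simp add: less_top)
  have "(\<integral>\<^sup>+ v. ennreal (norm (v $ i)) \<partial>g) \<le> (\<integral>\<^sup>+ v. 1 + ennreal (norm (v $ i) ^ 2) \<partial>g)"
  proof (rule nn_integral_mono)
    fix v :: "real^'m^'n"
    have "norm (v $ i) \<le> 1 + norm (v $ i) ^ 2"
    proof -
      have h1: "0 \<le> (norm (v $ i) - 1) * (norm (v $ i) - 1)" by simp
      have h2: "0 \<le> norm (v $ i) * norm (v $ i)" by simp
      have h3: "2 * norm (v $ i) \<le> 1 + norm (v $ i) * norm (v $ i)" using h1 by (simp add: algebra_simps)
      have h4: "0 \<le> norm (v $ i)" by simp
      from h3 h4 show ?thesis unfolding power2_eq_square by linarith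
    qed
    then show "ennreal (norm (v $ i)) \<le> 1 + ennreal (norm (v $ i) ^ 2)"
      by (metis ennreal_1 ennreal_leI ennreal_plus norm_ge_zero zero_le_one zero_le_power)
  qed
  also have "\<dots> = 1 + (\<integral>\<^sup>+ v. ennreal (norm (v $ i) ^ 2) \<partial>g)"
    using m2 by (subst nn_integral_add) (auto simp: g.emeasure_space_1)
  also have "\<dots> < \<infinity>" using A2f by simp
  finally have A1f: "(\<integral>\<^sup>+ v. ennreal (norm (v $ i)) \<partial>g) < \<infinity>" .
  define a where "a = enn2real (\<integral>\<^sup>+ v. ennreal (norm (v $ i)) \<partial>g)"
  define a2 where "a2 = enn2real (\<integral>\<^sup>+ v. ennreal (norm (v $ i) ^ 2) \<partial>g)"
  have A1: "(\<integral>\<^sup>+ v. ennreal (norm (v $ i)) \<partial>g) = ennreal a" unfolding a_def using A1f by simp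
  have A2: "(\<integral>\<^sup>+ v. ennreal (norm (v $ i) ^ 2) \<partial>g) = ennreal a2" unfolding a2_def using A2f by simp
  have a0: "a \<ge> 0" and a20: "a2 \<ge> 0" unfolding a_def a2_def by auto
  note K = stage_delta[OF e pg sg lp _ _ A1 a0 A2 a20]
  have K0: "1 \<le> 1 / l ^ CARD('m) + (\<epsilon> * a) * (l - 1)" if l: "l > 1" for l
  proof (rule eps_lim[where c="\<epsilon> * (l - 1)"])
    fix d :: real assume d: "0 < d" "d < 1"
    show "1 \<le> 1 / l ^ CARD('m) + (\<epsilon> * a) * (l - 1) + \<epsilon> * (l - 1) * d"
      using K(1)[OF d(1) l] by (simp add: algebra_simps)
  qed
  have K1: "a \<le> a / l ^ (CARD('m) + 1) + (\<epsilon> * a2) * (l - 1)" if l: "l > 1" for l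
  proof (rule eps_lim[where c="(1 - 1 / l ^ (CARD('m) + 1)) + \<epsilon> * (l - 1) * (2 * a + 1)"])
    fix d :: real assume d: "0 < d" "d < 1"
    define q where "q = 1 / l ^ (CARD('m) + 1)"
    have lp: "l ^ (CARD('m) + 1) \<ge> 1" using l by (intro one_le_power) auto
    have q: "0 \<le> 1 - q" using lp by (auto simp: q_def)
    have k: "(a - d) * (1 - q) \<le> \<epsilon> * (l - 1) * (a2 + 2 * d * a + d^2)"
      using K(2)[OF d(1) l] by (simp add: q_def)
    have el: "\<epsilon> * (l - 1) \<ge> 0" using e l by simp
    have "d^2 \<le> d" using d by (simp add: power2_eq_square mult_le_cancel_right1 less_imp_le)
    then have "\<epsilon> * (l - 1) * d^2 \<le> \<epsilon> * (l - 1) * d" using el by (rule mult_left_mono)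
    then have "a * (1 - q) \<le> \<epsilon> * (l - 1) * a2 + d * ((1 - q) + \<epsilon> * (l - 1) * (2 * a + 1))"
      using k by (simp add: algebra_simps)
    then show "a \<le> a / l ^ (CARD('m) + 1) + (\<epsilon> * a2) * (l - 1) + ((1 - 1 / l ^ (CARD('m) + 1)) + \<epsilon> * (l - 1) * (2 * a + 1)) * d"
      by (simp add: q_def algebra_simps)
  qed
  have L0: "real CARD('m) * 1 \<le> \<epsilon> * a"
    by (rule lim_L1) (use K0 in auto)
  have L1: "real (CARD('m) + 1) * a \<le> \<epsilon> * a2"
    by (rule lim_L1[OF a0]) (use K1 in auto)
  have "real CARD('m) * (real CARD('m) + 1) \<le> (\<epsilon> * a) * (real CARD('m) + 1)"
    using L0 by (intro mult_right_mono) auto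
  also have "\<dots> = \<epsilon> * (real (CARD('m) + 1) * a)" by (simp add: algebra_simps)
  also have "\<dots> \<le> \<epsilon> * (\<epsilon> * a2)" using L1 e by (intro mult_left_mono) auto
  finally have "real CARD('m) * (real CARD('m) + 1) \<le> \<epsilon> ^ 2 * a2" by (simp add: power2_eq_square mult.assoc)
  then have "real CARD('m) * (real CARD('m) + 1) / \<epsilon> ^ 2 \<le> a2"
    using e by (simp add: divide_le_eq mult.commute)
  then show ?thesis unfolding A2 by (rule ennreal_leI)
qed


theorem theorem4:
  fixes \<epsilon> :: real and g :: "(real^'m^'n) measure"
  assumes "\<epsilon> > 0"
    and "prob_space g"
    and "sets g = sets borel"
    and "lipschitz_private \<epsilon> blocknorm (additive_mech g)"
  shows "prob_space (density lborel (\<lambda>v::real^'m^'n. ennreal (lap_density \<epsilon> v)))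
    \<and> (\<integral>\<^sup>+ v. ennreal (norm v ^ 2) \<partial>g)
        \<ge> (\<integral>\<^sup>+ v. ennreal (norm v ^ 2 * lap_density \<epsilon> v) \<partial>(lborel :: (real^'m^'n) measure))
    \<and> (\<integral>\<^sup>+ v. ennreal (norm v ^ 2 * lap_density \<epsilon> v) \<partial>(lborel :: (real^'m^'n) measure))
        = ennreal (real CARD('n) * real CARD('m) * (real CARD('m) + 1) / \<epsilon> ^ 2)"
proof -
  note e = assms(1) and pg = assms(2) and sg = assms(3) and lp = assms(4)
  have A: "prob_space (density lborel (\<lambda>v::real^'m^'n. ennreal (lap_density \<epsilon> v)))
    \<and> (\<integral>\<^sup>+ v. ennreal (norm v ^ 2 * lap_density \<epsilon> v) \<partial>(lborel :: (real^'m^'n) measure))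
        = ennreal (real CARD('n) * real CARD('m) * (real CARD('m) + 1) / \<epsilon> ^ 2)"
    by (rule partA[OF e])
  have "(\<integral>\<^sup>+ v. ennreal (norm v ^ 2) \<partial>g) = (\<integral>\<^sup>+ v. (\<Sum>i\<in>UNIV. ennreal (norm (v $ i) ^ 2)) \<partial>g)"
    by (intro nn_integral_cong) (simp add: norm_sq_blocks)
  also have "\<dots> = (\<Sum>i\<in>UNIV. (\<integral>\<^sup>+ v. ennreal (norm (v $ i) ^ 2) \<partial>g))"
    by (rule nn_integral_sum) (subst measurable_cong_sets[OF sg refl], measurable)
  also have "\<dots> \<ge> (\<Sum>i\<in>(UNIV::'n set). ennreal (real CARD('m) * (real CARD('m) + 1) / \<epsilon> ^ 2))"
    by (intro sum_mono block_lower[OF e pg sg lp])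
  finally have B: "(\<integral>\<^sup>+ v. ennreal (norm v ^ 2) \<partial>g) \<ge> ennreal (real CARD('n) * real CARD('m) * (real CARD('m) + 1) / \<epsilon> ^ 2)"
    by (simp add: ennreal_of_nat_eq_real_of_nat ennreal_mult[symmetric] mult.assoc)
  show ?thesis using A B by simp
qed


end
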